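(* Let $n$ be odd and let $L=\bigoplus_{i\in\mathbb{Z}/n\mathbb{Z}}L_i$ be a $(\mathbb{Z}/n\mathbb{Z})$-graded Lie algebra over a field with $L_0=0$ such that $$\big[[x_{d_1},x_{d_2}],[x_{d_3},x]\big]=0$$ for all $x_{d_i}\in L_{d_i}$ and all $x\in L$ whenever $(d_1,d_2,d_3)$ is $(-1)$-independent. Then $L$ is metabelian, i.e. $[[L,L],[L,L]]=0$.
   Context: A $(\mathbb{Z}/n\mathbb{Z})$-graded Lie algebra is $L=\bigoplus_{i=0}^{n-1}L_i$ with $[L_i,L_j]\subseteq L_{i+j \bmod n}$. A sequence $(a_1,\dots,a_k)$ in $\mathbb{Z}/n\mathbb{Z}$ is $(-1)$-dependent if $t_1a_1+\dots+t_ka_k=0$ for some $t_i\in\{0,1\}$ not all zero, and $(-1)$-independent otherwise. *)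

theory Defs
  imports Main "HOL.Vector_Spaces"
begin

definition lie_algebra :: "('k::field \<Rightarrow> 'v::ab_group_add \<Rightarrow> 'v) \<Rightarrow> ('v \<Rightarrow> 'v \<Rightarrow> 'v) \<Rightarrow> bool" where
  "lie_algebra scale br \<longleftrightarrow>
     vector_space scale \<and>
     (\<forall>x y z. br (x + y) z = br x z + br y z) \<and>
     (\<forall>x y z. br x (y + z) = br x y + br x z) \<and>
     (\<forall>c x y. br (scale c x) y = scale c (br x y)) \<and>
     (\<forall>c x y. br x (scale c y) = scale c (br x y)) \<and>
     (\<forall>x. br x x = 0) \<and>
     (\<forall>x y z. br x (br y z) + br y (br z x) + br z (br x y) = 0)"

definition graded_lie_algebra ::
  "('k::field \<Rightarrow> 'v::ab_group_add \<Rightarrow> 'v) \<Rightarrow> ('v \<Rightarrow> 'v \<Rightarrow> 'v) \<Rightarrow> nat \<Rightarrow> (nat \<Rightarrow> 'v set) \<Rightarrow> bool" where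
  "graded_lie_algebra scale br n G \<longleftrightarrow>
     lie_algebra scale br \<and> 0 < n \<and>
     (\<forall>i<n. module.subspace scale (G i)) \<and>
     (\<forall>x. \<exists>!f. (\<forall>i<n. f i \<in> G i) \<and> (\<forall>i. n \<le> i \<longrightarrow> f i = 0) \<and> x = (\<Sum>i<n. f i)) \<and>
     (\<forall>i j x y. i < n \<longrightarrow> j < n \<longrightarrow> x \<in> G i \<longrightarrow> y \<in> G j \<longrightarrow> br x y \<in> G ((i + j) mod n))"

definition minus_one_dependent :: "nat \<Rightarrow> nat list \<Rightarrow> bool" where
  "minus_one_dependent n ds \<longleftrightarrow>
     (\<exists>t::nat \<Rightarrow> nat. (\<forall>i<length ds. t i \<in> {0, 1}) \<and> (\<exists>i<length ds. t i \<noteq> 0) \<and>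
        (\<Sum>i<length ds. t i * ds ! i) mod n = 0)"

definition minus_one_independent :: "nat \<Rightarrow> nat list \<Rightarrow> bool" where
  "minus_one_independent n ds \<longleftrightarrow> \<not> minus_one_dependent n ds"

definition lie_prod :: "('k::field \<Rightarrow> 'v::ab_group_add \<Rightarrow> 'v) \<Rightarrow> ('v \<Rightarrow> 'v \<Rightarrow> 'v) \<Rightarrow> 'v set \<Rightarrow> 'v set \<Rightarrow> 'v set" where
  "lie_prod scale br A B = module.span scale {br a b | a b. a \<in> A \<and> b \<in> B}"

end

theory Submission
  imports Defs
begin


lemma caseB:
  fixes a b c d n :: nat
  assumes "odd n" "a<n" "b<n" "c<n" "d<n" "a\<noteq>0" "b\<noteq>0" "c\<noteq>0" "d\<noteq>0"
    "a+b\<noteq>n" "c+d\<noteq>n" "a+b+c+d\<noteq>n" "a+b+c+d\<noteq>2*n" "a+b+c+d\<noteq>3*n" "a+c=n"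
  and N2: "a+d=n \<or> b+d=n \<or> a+b+d=n \<or> a+b+d=2*n"
  and N4: "b+c=n \<or> b+d=n \<or> b+c+d=n \<or> b+c+d=2*n"
  and N7: "\<not>(a+d=n \<and> (b+c+d=n \<or> b+c+d=2*n))"
  and N9: "\<not>(b+c=n \<and> (a+b+d=n \<or> a+b+d=2*n))"
  shows False
proof -
  have oa: "2*a \<noteq> n" using assms(1) by auto
  from N2 show False
  proof (elim disjE)
    assume h: "a+d=n" from N4 show False by (elim disjE) (use h N7 assms(13,15) in linarith)+
  next
    assume "b+d=n" then show False using assms(13,15) by linarith
  next
    assume h: "a+b+d=n"
    from N4 show False
    proof (elim disjE)
      assume "b+c=n" then show False using N9 h by blast
    next
      assume "b+d=n" then show False using h assms(6,2) by linarith
    next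
      assume "b+c+d=n" then show False using h assms(2,4,15) oa by linarith
    next
      assume "b+c+d=2*n" then show False using h assms(2,4,15) oa by linarith
    qed
  next
    assume h: "a+b+d=2*n"
    from N4 show False
    proof (elim disjE)
      assume "b+c=n" then show False using N9 h by blast
    next
      assume "b+d=n" then show False using h assms(6,2) by linarith
    next
      assume "b+c+d=n" then show False using h assms(2,4,15) oa by linarith
    next
      assume "b+c+d=2*n" then show False using h assms(2,4,15) oa by linarith
    qed
  qed
qed

lemma comb_lin:
  fixes a b c d n :: nat
  assumes B: "odd n" "a<n" "b<n" "c<n" "d<n" "a\<noteq>0" "b\<noteq>0" "c\<noteq>0" "d\<noteq>0"
    "a+b\<noteq>n" "c+d\<noteq>n" "a+b+c+d\<noteq>n" "a+b+c+d\<noteq>2*n" "a+b+c+d\<noteq>3*n"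
  and N1: "a+c=n \<or> b+c=n \<or> a+b+c=n \<or> a+b+c=2*n"
  and N2: "a+d=n \<or> b+d=n \<or> a+b+d=n \<or> a+b+d=2*n"
  and N3: "a+c=n \<or> a+d=n \<or> a+c+d=n \<or> a+c+d=2*n"
  and N4: "b+c=n \<or> b+d=n \<or> b+c+d=n \<or> b+c+d=2*n"
  and N5: "\<not>((a+b+c=n \<or> a+b+c=2*n) \<and> (a+b+d=n \<or> a+b+d=2*n))"
  and N7: "\<not>(a+c=n \<and> a+d=n \<and> (b+c+d=n \<or> b+c+d=2*n))"
  and N8: "\<not>(b+c=n \<and> b+d=n \<and> (a+c+d=n \<or> a+c+d=2*n))"
  and N9: "\<not>(a+c=n \<and> b+c=n \<and> (a+b+d=n \<or> a+b+d=2*n))"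
  and N10: "\<not>(a+d=n \<and> b+d=n \<and> (a+b+c=n \<or> a+b+c=2*n))"
  shows False
proof -
  consider "a+c=n" | "b+c=n" | "a+d=n" | "b+d=n" | "a+c\<noteq>n \<and> b+c\<noteq>n \<and> a+d\<noteq>n \<and> b+d\<noteq>n" by blast
  then show False
  proof cases
    case 1 show False by (rule caseB[of n a b c d], insert B 1 N2 N4 N7 N9, (simp_all only: ac_simps)?, (argo+)?)
  next
    case 2 show False by (rule caseB[of n b a c d], insert B 2 N2 N3 N8 N9, (simp_all only: ac_simps)?, (argo+)?)
  next
    case 3 show False by (rule caseB[of n a b d c], insert B 3 N1 N4 N7 N10, (simp_all only: ac_simps)?, (argo+)?)
  next
    case 4 show False by (rule caseB[of n b a d c], insert B 4 N1 N3 N8 N10, (simp_all only: ac_simps)?, (argo+)?)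
  next
    case 5 then show False using N1 N2 N5 by blast
  qed
qed

lemma mod0_4: fixes x n :: nat assumes "x < 4*n" shows "(x mod n = 0) = (x = 0 \<or> x = n \<or> x = 2*n \<or> x = 3*n)"
proof
  assume "x mod n = 0" then obtain q where "x = n*q" by auto
  with assms have "q < 4" by (metis mult.commute mult_less_cancel2)
  then have "q = 0 \<or> q = 1 \<or> q = 2 \<or> q = 3" by auto
  then show "x = 0 \<or> x = n \<or> x = 2*n \<or> x = 3*n" using \<open>x = n*q\<close> by auto
qed auto

lemma mod_pair: fixes x y n :: nat assumes "x<n" "y<n" "x\<noteq>0" shows "((x+y) mod n = 0) = (x+y = n)"
proof -
  have "x+y < 4*n" using assms by linarith
  from mod0_4[OF this] show ?thesis using assms by linarith
qed

lemma mod_trip: fixes x y z n :: nat assumes "x<n" "y<n" "z<n" "x\<noteq>0" shows "((x+y+z) mod n = 0) = (x+y+z = n \<or> x+y+z = 2*n)"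
proof -
  have "x+y+z < 4*n" using assms by linarith
  from mod0_4[OF this] show ?thesis using assms by linarith
qed

lemma mod_quad: fixes x y z w n :: nat assumes "x<n" "y<n" "z<n" "w<n" "x\<noteq>0"
  shows "((x+y+z+w) mod n = 0) = (x+y+z+w = n \<or> x+y+z+w = 2*n \<or> x+y+z+w = 3*n)"
proof -
  have "x+y+z+w < 4*n" using assms by linarith
  from mod0_4[OF this] show ?thesis using assms by linarith
qed

lemma comb:
  fixes a b c d n :: nat
  assumes B: "odd n" "a<n" "b<n" "c<n" "d<n" "a\<noteq>0" "b\<noteq>0" "c\<noteq>0" "d\<noteq>0"
    and "(a+b) mod n \<noteq> 0" "(c+d) mod n \<noteq> 0" "(a+b+c+d) mod n \<noteq> 0"
  shows "(a+c) mod n \<noteq> 0 \<and> (b+c) mod n \<noteq> 0 \<and> (a+b+c) mod n \<noteq> 0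
      \<or> (a+d) mod n \<noteq> 0 \<and> (b+d) mod n \<noteq> 0 \<and> (a+b+d) mod n \<noteq> 0
      \<or> (a+c) mod n \<noteq> 0 \<and> (a+d) mod n \<noteq> 0 \<and> (a+c+d) mod n \<noteq> 0
      \<or> (b+c) mod n \<noteq> 0 \<and> (b+d) mod n \<noteq> 0 \<and> (b+c+d) mod n \<noteq> 0
      \<or> (a+b+c) mod n = 0 \<and> (a+b+d) mod n = 0
      \<or> (a+c+d) mod n = 0 \<and> (b+c+d) mod n = 0
      \<or> (a+c) mod n = 0 \<and> (a+d) mod n = 0 \<and> (b+c+d) mod n = 0
      \<or> (b+c) mod n = 0 \<and> (b+d) mod n = 0 \<and> (a+c+d) mod n = 0
      \<or> (a+c) mod n = 0 \<and> (b+c) mod n = 0 \<and> (a+b+d) mod n = 0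
      \<or> (a+d) mod n = 0 \<and> (b+d) mod n = 0 \<and> (a+b+c) mod n = 0"
proof -
  note P = mod_pair[OF B(2,3,6)] mod_pair[OF B(4,5,8)] mod_pair[OF B(2,4,6)] mod_pair[OF B(2,5,6)]
    mod_pair[OF B(3,4,7)] mod_pair[OF B(3,5,7)]
  note T = mod_trip[OF B(2,3,4,6)] mod_trip[OF B(2,3,5,6)] mod_trip[OF B(2,4,5,6)] mod_trip[OF B(3,4,5,7)]
  note Q = mod_quad[OF B(2,3,4,5,6)]
  have X: "a+b\<noteq>n" "c+d\<noteq>n" "a+b+c+d\<noteq>n" "a+b+c+d\<noteq>2*n" "a+b+c+d\<noteq>3*n"
    using assms(10-12) unfolding P T Q by auto
  show ?thesis
  proof (rule ccontr)
    assume H: "\<not> ?thesis"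
    show False
      apply (rule comb_lin[OF B X])
      using H unfolding P T by argo+
  qed
qed



locale gla =
  fixes scale :: "'k::field \<Rightarrow> 'v::ab_group_add \<Rightarrow> 'v"
    and br :: "'v \<Rightarrow> 'v \<Rightarrow> 'v"
    and n :: nat and G :: "nat \<Rightarrow> 'v set"
  assumes gr: "graded_lie_algebra scale br n G"
    and G0: "G 0 = {0}"
begin

lemma lie: "lie_algebra scale br" using gr unfolding graded_lie_algebra_def by blast
lemma vs: "vector_space scale" using lie unfolding lie_algebra_def by blast
lemma addL: "br (x + y) z = br x z + br y z" using lie unfolding lie_algebra_def by blast
lemma addR: "br x (y + z) = br x y + br x z" using lie unfolding lie_algebra_def by blast
lemma scL: "br (scale c x) y = scale c (br x y)" using lie unfolding lie_algebra_def by blast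
lemma scR: "br x (scale c y) = scale c (br x y)" using lie unfolding lie_algebra_def by blast
lemma alt: "br x x = 0" using lie unfolding lie_algebra_def by blast
lemma jac: "br x (br y z) + br y (br z x) + br z (br x y) = 0" using lie unfolding lie_algebra_def by blast
lemma npos: "0 < n" using gr unfolding graded_lie_algebra_def by blast
lemma grade: "i < n \<Longrightarrow> j < n \<Longrightarrow> x \<in> G i \<Longrightarrow> y \<in> G j \<Longrightarrow> br x y \<in> G ((i + j) mod n)"
  using gr unfolding graded_lie_algebra_def by blast
lemma decomp: "\<exists>f. (\<forall>i<n. f i \<in> G i) \<and> x = (\<Sum>i<n. f i)"
  using gr unfolding graded_lie_algebra_def by metis

lemma br0L[simp]: "br 0 y = 0"
  using addL[of 0 0 y] by simp
lemma br0R[simp]: "br x 0 = 0"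
  using addR[of x 0 0] by simp
lemma anti: "br y x = - br x y"
proof -
  have "0 = br (x+y) (x+y)" by (simp add: alt)
  also have "\<dots> = br x x + br y x + (br x y + br y y)" by (simp add: addL addR)
  finally have "br y x + br x y = 0" by (simp add: alt)
  then show ?thesis by (simp add: eq_neg_iff_add_eq_0)
qed
lemma negR: "br x (- y) = - br x y"
  using addR[of x y "-y"] by (metis add.commute br0R eq_neg_iff_add_eq_0 right_minus)
lemma negL: "br (- x) y = - br x y"
  using addL[of x "-x" y] by (metis add.commute br0L eq_neg_iff_add_eq_0 right_minus)
lemma diffL: "br (x - y) z = br x z - br y z"
  using addL[of x "-y" z] negL by simp
lemma jac1: "br (br x y) z = br x (br y z) - br y (br x z)"
proof -
  have "br z (br x y) = - br (br x y) z" by (rule anti)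
  moreover have "br y (br z x) = - br y (br x z)" by (simp add: anti[of z x] negR)
  ultimately have "br x (br y z) + - br y (br x z) + - br (br x y) z = 0" using jac[of x y z] by simp
  then have "br x (br y z) - br y (br x z) - br (br x y) z = 0" by simp
  then show ?thesis by (metis right_minus_eq)
qed
lemma der: "br p (br z w) = br (br p z) w - br (br p w) z"
proof -
  have "br (br p z) w = br p (br z w) - br z (br p w)" by (rule jac1)
  moreover have "br z (br p w) = - br (br p w) z" by (rule anti)
  ultimately show ?thesis by simp
qed
lemma jac2: "br (br x y) z = br (br x z) y + br x (br y z)"
proof -
  have "br y (br x z) = - br (br x z) y" by (rule anti)
  then show ?thesis using jac1[of x y z] by simp
qed

lemma zeroG: "x \<in> G 0 \<Longrightarrow> x = 0" using G0 by blast

lemma brsumL: "br (sum f A) y = (\<Sum>i\<in>A. br (f i) y)"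
  by (induction A rule: infinite_finite_induct) (auto simp: addL)
lemma brsumR: "br y (sum f A) = (\<Sum>i\<in>A. br y (f i))"
  by (induction A rule: infinite_finite_induct) (auto simp: addR)

end


lemma indep:
  fixes a b c n :: nat
  assumes "a<n" "b<n" "c<n" "a\<noteq>0" "b\<noteq>0" "c\<noteq>0" "(a+b) mod n \<noteq> 0" "(a+c) mod n \<noteq> 0"
    "(b+c) mod n \<noteq> 0" "(a+b+c) mod n \<noteq> 0"
  shows "minus_one_independent n [a,b,c]"
  unfolding minus_one_independent_def minus_one_dependent_def
proof
  assume "\<exists>t::nat\<Rightarrow>nat. (\<forall>i<length [a,b,c]. t i \<in> {0,1}) \<and> (\<exists>i<length [a,b,c]. t i \<noteq> 0) \<and>
        (\<Sum>i<length [a,b,c]. t i * [a,b,c] ! i) mod n = 0"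
  then obtain t :: "nat \<Rightarrow> nat" where H: "(\<forall>i<length [a,b,c]. t i \<in> {0,1}) \<and> (\<exists>i<length [a,b,c]. t i \<noteq> 0) \<and>
        (\<Sum>i<length [a,b,c]. t i * [a,b,c] ! i) mod n = 0" ..
  have t: "\<forall>i<length [a,b,c]. t i \<in> {0,1}" using H by (rule conjunct1)
  have nz: "\<exists>i<length [a,b,c]. t i \<noteq> 0" using H by blast
  have s: "(\<Sum>i<length [a,b,c]. t i * [a,b,c] ! i) mod n = 0" using H by blast
  have I: "{..<length [a,b,c]} = {0,1,2}" by auto
  have e: "(\<Sum>i<length [a,b,c]. t i * [a,b,c] ! i) = t 0 * a + t 1 * b + t 2 * c"
    using I by simp
  have "t 0 \<in> {0,1}" "t 1 \<in> {0,1}" "t 2 \<in> {0,1}" using t I by (metis insertI1 insertI2 lessThan_iff)+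
  then have t0: "t 0 = 0 \<or> t 0 = 1" and t1: "t 1 = 0 \<or> t 1 = 1" and t2: "t 2 = 0 \<or> t 2 = 1" by auto
  have nz': "t 0 \<noteq> 0 \<or> t 1 \<noteq> 0 \<or> t 2 \<noteq> 0" using nz I by (metis emptyE insertE lessThan_iff)
  from s have s': "(t 0 * a + t 1 * b + t 2 * c) mod n = 0" by (simp only: e)
  have m: "t 0 * a + t 1 * b + t 2 * c \<in> {a, b, c, a+b, a+c, b+c, a+b+c}"
    using t0 t1 t2 nz' by (elim disjE) simp_all
  have aa: "a mod n \<noteq> 0" "b mod n \<noteq> 0" "c mod n \<noteq> 0" using assms(1-6) by simp_all
  from m show False by (elim insertE emptyE) (insert s' aa assms(7-10), simp_all)
qed

locale gla2 = gla +
  assumes oddn: "odd n"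
    and hyp: "\<And>d1 d2 d3 x1 x2 x3 x. d1 < n \<Longrightarrow> d2 < n \<Longrightarrow> d3 < n \<Longrightarrow>
           minus_one_independent n [d1, d2, d3] \<Longrightarrow>
           x1 \<in> G d1 \<Longrightarrow> x2 \<in> G d2 \<Longrightarrow> x3 \<in> G d3 \<Longrightarrow>
           br (br x1 x2) (br x3 x) = 0"

context gla begin

lemma modlt: "k mod n < n" using npos by simp

lemma T3:
  assumes "a<n" "b<n" "c<n" "d<n" "x\<in>G a" "y\<in>G b" "z\<in>G c" "w\<in>G d"
    "(a+b+c) mod n = 0" "(a+b+d) mod n = 0"
  shows "br (br x y) (br z w) = 0"
proof -
  have p: "br x y \<in> G ((a+b) mod n)" using grade[OF assms(1,2,5,6)] .
  have "br (br x y) z \<in> G (((a+b) mod n + c) mod n)" using grade[OF modlt assms(3) p assms(7)] .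
  then have 1: "br (br x y) z = 0" using assms(9) by (intro zeroG) (simp add: mod_add_left_eq)
  have "br (br x y) w \<in> G (((a+b) mod n + d) mod n)" using grade[OF modlt assms(4) p assms(8)] .
  then have 2: "br (br x y) w = 0" using assms(10) by (intro zeroG) (simp add: mod_add_left_eq)
  show ?thesis by (simp add: der 1 2)
qed

lemma T2:
  assumes "a<n" "b<n" "c<n" "d<n" "x\<in>G a" "y\<in>G b" "z\<in>G c" "w\<in>G d"
    "(a+c) mod n = 0" "(a+d) mod n = 0" "(b+c+d) mod n = 0"
  shows "br (br x y) (br z w) = 0"
proof -
  have h1: "br x z = 0" using grade[OF assms(1,3,5,7)] assms(9) by (intro zeroG) simp
  have h2: "br x w = 0" using grade[OF assms(1,4,5,8)] assms(10) by (intro zeroG) simp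
  have u: "br y z \<in> G ((b+c) mod n)" using grade[OF assms(2,3,6,7)] .
  have "br (br y z) w \<in> G (((b+c) mod n + d) mod n)" using grade[OF modlt assms(4) u assms(8)] .
  then have h3: "br (br y z) w = 0" using assms(11) by (intro zeroG) (simp add: mod_add_left_eq)
  have v: "br y w \<in> G ((b+d) mod n)" using grade[OF assms(2,4,6,8)] .
  have "br (br y w) z \<in> G (((b+d) mod n + c) mod n)" using grade[OF modlt assms(3) v assms(7)] .
  moreover have "((b+d) mod n + c) mod n = (b+c+d) mod n"
    using mod_add_left_eq[of "b+d" n c] by (simp add: ac_simps)
  ultimately have h4: "br (br y w) z = 0" using assms(11) by (intro zeroG) simp
  have 1: "br (br (br x y) z) w = 0"
    by (simp add: jac2[of x y z] h1 jac2[of x "br y z" w] h2 h3)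
  have 2: "br (br (br x y) w) z = 0"
    by (simp add: jac2[of x y w] h2 jac2[of x "br y w" z] h1 h4)
  show ?thesis by (simp add: der 1 2)
qed

end

context gla2 begin

lemma hom:
  assumes "a<n" "b<n" "c<n" "d<n" "x\<in>G a" "y\<in>G b" "z\<in>G c" "w\<in>G d"
  shows "br (br x y) (br z w) = 0"
proof -
  have sw1: "br (br x y) (br z w) = - br (br z w) (br x y)" by (rule anti)
  have sw2: "br (br x y) (br z w) = - br (br y x) (br z w)" by (simp add: anti[of y x] negL)
  have sw3: "br (br x y) (br z w) = - br (br x y) (br w z)" by (simp add: anti[of w z] negR)
  consider "a = 0" | "b = 0" | "c = 0" | "d = 0" | "(a+b) mod n = 0" | "(c+d) mod n = 0"
    | "(a+b+c+d) mod n = 0"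
    | "a\<noteq>0" "b\<noteq>0" "c\<noteq>0" "d\<noteq>0" "(a+b) mod n \<noteq> 0" "(c+d) mod n \<noteq> 0" "(a+b+c+d) mod n \<noteq> 0"
    by blast
  then show ?thesis
  proof cases
    case 1 then have "x = 0" using assms(5) zeroG by simp
    then show ?thesis by simp
  next
    case 2 then have "y = 0" using assms(6) zeroG by simp
    then show ?thesis by simp
  next
    case 3 then have "z = 0" using assms(7) zeroG by simp
    then show ?thesis by simp
  next
    case 4 then have "w = 0" using assms(8) zeroG by simp
    then show ?thesis by simp
  next
    case 5 then have "br x y = 0" using grade[OF assms(1,2,5,6)] zeroG by simp
    then show ?thesis by simp
  next
    case 6 then have "br z w = 0" using grade[OF assms(3,4,7,8)] zeroG by simp
    then show ?thesis by simp
  next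
    case 7
    have p: "br x y \<in> G ((a+b) mod n)" using grade[OF assms(1,2,5,6)] .
    have q: "br z w \<in> G ((c+d) mod n)" using grade[OF assms(3,4,7,8)] .
    have "br (br x y) (br z w) \<in> G (((a+b) mod n + (c+d) mod n) mod n)" using grade[OF modlt modlt p q] .
    then show ?thesis using 7 by (intro zeroG) (simp add: mod_add_eq add.assoc)
  next
    case 8
    note C = comb[OF oddn assms(1-4) 8]
    from C show ?thesis
    proof (elim disjE)
      assume h: "(a+c) mod n \<noteq> 0 \<and> (b+c) mod n \<noteq> 0 \<and> (a+b+c) mod n \<noteq> 0"
        have "minus_one_independent n [a,b,c]" by (rule indep[OF assms(1,2,3) 8(1,2,3) 8(5)]) (insert h, simp_all)
        then show ?thesis using hyp[OF assms(1,2,3) _ assms(5,6,7)] by blast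
    next
      assume h: "(a+d) mod n \<noteq> 0 \<and> (b+d) mod n \<noteq> 0 \<and> (a+b+d) mod n \<noteq> 0"
        have "minus_one_independent n [a,b,d]" by (rule indep[OF assms(1,2,4) 8(1,2,4) 8(5)]) (insert h, simp_all)
        then have "br (br x y) (br w z) = 0" using hyp[OF assms(1,2,4) _ assms(5,6,8)] by blast
        then show ?thesis using sw3 by simp
    next
      assume h: "(a+c) mod n \<noteq> 0 \<and> (a+d) mod n \<noteq> 0 \<and> (a+c+d) mod n \<noteq> 0"
        have "minus_one_independent n [c,d,a]" by (rule indep[OF assms(3,4,1) 8(3,4,1) 8(6)]) (insert h, simp_all only: ac_simps not_False_eq_True)
        then have "br (br z w) (br x y) = 0" using hyp[OF assms(3,4,1) _ assms(7,8,5)] by blast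
        then show ?thesis using sw1 by simp
    next
      assume h: "(b+c) mod n \<noteq> 0 \<and> (b+d) mod n \<noteq> 0 \<and> (b+c+d) mod n \<noteq> 0"
        have "minus_one_independent n [c,d,b]" by (rule indep[OF assms(3,4,2) 8(3,4,2) 8(6)]) (insert h, simp_all only: ac_simps not_False_eq_True)
        then have "br (br z w) (br y x) = 0" using hyp[OF assms(3,4,2) _ assms(7,8,6)] by blast
        then show ?thesis using sw1 by (simp add: anti[of y x] negR)
    next
      assume h: "(a+b+c) mod n = 0 \<and> (a+b+d) mod n = 0"
        then show ?thesis using T3[OF assms(1-8) conjunct1[OF h] conjunct2[OF h]] by blast
    next
      assume h: "(a+c+d) mod n = 0 \<and> (b+c+d) mod n = 0"
        have "br (br z w) (br x y) = 0" by (rule T3[OF assms(3,4,1,2,7,8,5,6)]) (insert h, simp_all only: ac_simps not_False_eq_True)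
        then show ?thesis using sw1 by simp
    next
      assume h: "(a+c) mod n = 0 \<and> (a+d) mod n = 0 \<and> (b+c+d) mod n = 0"
        then show ?thesis using T2[OF assms(1-8) conjunct1[OF h] conjunct1[OF conjunct2[OF h]] conjunct2[OF conjunct2[OF h]]] by blast
    next
      assume h: "(b+c) mod n = 0 \<and> (b+d) mod n = 0 \<and> (a+c+d) mod n = 0"
        have "br (br y x) (br z w) = 0" by (rule T2[OF assms(2,1,3,4,6,5,7,8)]) (insert h, simp_all only: ac_simps not_False_eq_True)
        then show ?thesis using sw2 by simp
    next
      assume h: "(a+c) mod n = 0 \<and> (b+c) mod n = 0 \<and> (a+b+d) mod n = 0"
        have "br (br z w) (br x y) = 0" by (rule T2[OF assms(3,4,1,2,7,8,5,6)]) (insert h, simp_all only: ac_simps not_False_eq_True)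
        then show ?thesis using sw1 by simp
    next
      assume h: "(a+d) mod n = 0 \<and> (b+d) mod n = 0 \<and> (a+b+c) mod n = 0"
        have "br (br w z) (br x y) = 0" by (rule T2[OF assms(4,3,1,2,8,7,5,6)]) (insert h, simp_all only: ac_simps not_False_eq_True)
        then show ?thesis using sw1 by (simp add: anti[of w z] negL)
    qed
  qed
qed

end


context gla2 begin

interpretation V: vector_space scale by (rule vs)

lemma s1:
  assumes "a<n" "b<n" "c<n" "x\<in>G a" "y\<in>G b" "z\<in>G c"
  shows "br (br x y) (br z w) = 0"
proof -
  obtain f where f: "\<forall>i<n. f i \<in> G i" "w = (\<Sum>i<n. f i)" using decomp by blast
  have "br (br x y) (br z w) = (\<Sum>i<n. br (br x y) (br z (f i)))" by (simp add: f(2) brsumR)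
  also have "\<dots> = 0" using hom[OF assms(1-3) _ assms(4-6)] f(1) by (intro sum.neutral) auto
  finally show ?thesis .
qed

lemma s2:
  assumes "a<n" "b<n" "x\<in>G a" "y\<in>G b"
  shows "br (br x y) (br z w) = 0"
proof -
  obtain f where f: "\<forall>i<n. f i \<in> G i" "z = (\<Sum>i<n. f i)" using decomp by blast
  have "br (br x y) (br z w) = (\<Sum>i<n. br (br x y) (br (f i) w))" by (simp add: f(2) brsumL brsumR)
  also have "\<dots> = 0" using s1[OF assms(1,2) _ assms(3,4)] f(1) by (intro sum.neutral) auto
  finally show ?thesis .
qed

lemma s3:
  assumes "a<n" "x\<in>G a"
  shows "br (br x y) (br z w) = 0"
proof -
  obtain f where f: "\<forall>i<n. f i \<in> G i" "y = (\<Sum>i<n. f i)" using decomp by blast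
  have "br (br x y) (br z w) = (\<Sum>i<n. br (br x (f i)) (br z w))" by (simp add: f(2) brsumL brsumR)
  also have "\<dots> = 0" using s2[OF assms(1) _ assms(2)] f(1) by (intro sum.neutral) auto
  finally show ?thesis .
qed

lemma allW: "br (br x y) (br z w) = 0"
proof -
  obtain f where f: "\<forall>i<n. f i \<in> G i" "x = (\<Sum>i<n. f i)" using decomp by blast
  have "br (br x y) (br z w) = (\<Sum>i<n. br (br (f i) y) (br z w))" by (simp add: f(2) brsumL)
  also have "\<dots> = 0" using s3 f(1) by (intro sum.neutral) auto
  finally show ?thesis .
qed

lemma final: "lie_prod scale br (lie_prod scale br UNIV UNIV) (lie_prod scale br UNIV UNIV) = {0}"
proof -
  define B where "B = {br a b | a b. a \<in> UNIV \<and> b \<in> UNIV}"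
  define X where "X = V.span B"
  have X: "lie_prod scale br UNIV UNIV = X" unfolding X_def B_def lie_prod_def ..
  have sub: "V.subspace {q. br p q = 0}" for p
    by (rule V.subspaceI) (auto simp: addR scR)
  have subL: "V.subspace {p. br p q = 0}" for q
    by (rule V.subspaceI) (auto simp: addL scL)
  have 1: "br p q = 0" if "p \<in> B" "q \<in> X" for p q
  proof -
    have "B \<subseteq> {q. br p q = 0}" using that(1) allW unfolding B_def by auto
    then have "X \<subseteq> {q. br p q = 0}" unfolding X_def by (rule V.span_minimal[OF _ sub])
    then show ?thesis using that(2) by blast
  qed
  have 2: "br p q = 0" if "p \<in> X" "q \<in> X" for p q
  proof -
    have "B \<subseteq> {p. br p q = 0}" using 1 that(2) by auto
    then have "X \<subseteq> {p. br p q = 0}" unfolding X_def by (rule V.span_minimal[OF _ subL])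
    then show ?thesis using that(1) by blast
  qed
  have "{br p q | p q. p \<in> X \<and> q \<in> X} \<subseteq> {0}" using 2 by auto
  then have "V.span {br p q | p q. p \<in> X \<and> q \<in> X} \<subseteq> V.span {0}" by (rule V.span_mono)
  also have "V.span {0} = {0}" using V.span_insert_0[of "{}"] by simp
  finally have "V.span {br p q | p q. p \<in> X \<and> q \<in> X} \<subseteq> {0}" .
  moreover have "0 \<in> V.span {br p q | p q. p \<in> X \<and> q \<in> X}" by (rule V.span_zero)
  ultimately have "V.span {br p q | p q. p \<in> X \<and> q \<in> X} = {0}" by blast
  moreover have "lie_prod scale br X X = V.span {br p q | p q. p \<in> X \<and> q \<in> X}"
    unfolding lie_prod_def by (rule refl)
  ultimately show ?thesis unfolding X by simp
qed

end

theorem lemma3: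
  fixes scale :: "'k::field \<Rightarrow> 'v::ab_group_add \<Rightarrow> 'v"
    and br :: "'v \<Rightarrow> 'v \<Rightarrow> 'v"
    and n :: nat and G :: "nat \<Rightarrow> 'v set"
  assumes "odd n"
    and "graded_lie_algebra scale br n G"
    and "G 0 = {0}"
    and "\<And>d1 d2 d3 x1 x2 x3 x. d1 < n \<Longrightarrow> d2 < n \<Longrightarrow> d3 < n \<Longrightarrow>
           minus_one_independent n [d1, d2, d3] \<Longrightarrow>
           x1 \<in> G d1 \<Longrightarrow> x2 \<in> G d2 \<Longrightarrow> x3 \<in> G d3 \<Longrightarrow>
           br (br x1 x2) (br x3 x) = 0"
  shows "lie_prod scale br (lie_prod scale br UNIV UNIV) (lie_prod scale br UNIV UNIV) = {0}"
proof -
  interpret gla2 scale br n G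
    by (rule gla2.intro[OF gla.intro gla2_axioms.intro]) (fact assms)+
  show ?thesis by (rule final)
qed

end
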